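(* Let $E\subset\mathbb R^n$ be a bounded open set, $\Omega\in L_s(S^{n-1})$ with $1<s\le\infty$ homogeneous of degree $0$, $p(\cdot)\in\mathcal P^{\log}(E)$ with $p(\cdot)/s'\in\mathcal B(E)$ and $(p')_+\le s$, where $s'=s/(s-1)$. Then $\|M_\Omega f\|_{L^{p(\cdot)}(E)}\lesssim\|f\|_{L^{p(\cdot)}(E)}$ for all $f\in L^{p(\cdot)}(E)$.
   Context: Throughout, $n\ge2$, $B(x,r)$ is the open Euclidean ball, $\tilde B(x,r)=B(x,r)\cap E$. For measurable $p(\cdot):E\to[1,\infty)$ let $p_-=\operatorname{ess\,inf}_Ep$, $p_+=\operatorname{ess\,sup}_Ep$; $L^{p(\cdot)}(E)$ is the set of measurable $f$ with $\int_E(|f(x)|/\lambda)^{p(x)}dx<\infty$ for some $\lambda>0$, with Luxemburg norm $\|f\|_{L^{p(\cdot)}(E)}=\inf\{\lambda>0:\int_E(|f(x)|/\lambda)^{p(x)}dx\le1\}$. $p'(x)=p(x)/(p(x)-1)$, $(p')_+=\operatorname{ess\,sup}_Ep'$. $\mathcal P^{\log}(E)$ is the set of measurable $p$ with $1\le p_-\le p_+<\infty$ satisfying $|p(x)-p(y)|\le -C/\log|x-y|$ for $x,y\in E$, $|x-y|\le1/2$. $\mathcal B(E)$ is the set of $p\in\mathcal P^{\log}(E)$ such that the Hardy–Littlewood maximal operator is bounded on $L^{p(\cdot)}(E)$. $M_\Omega f(x)=\sup_{r>0}\frac1{|B(x,r)|}\int_{\tilde B(x,r)}|\Omega(x-y)||f(y)|dy$.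 *)

theory Defs
  imports "HOL-Analysis.Analysis" "HOL-Probability.Essential_Supremum"
begin

definition ess_sup_on :: "'a::euclidean_space set \<Rightarrow> ('a \<Rightarrow> ereal) \<Rightarrow> ereal" where
  "ess_sup_on E q = esssup (restrict_space lebesgue E) q"

definition p_plus :: "'a::euclidean_space set \<Rightarrow> ('a \<Rightarrow> real) \<Rightarrow> ereal" where
  "p_plus E p = ess_sup_on E (\<lambda>x. ereal (p x))"

definition p_minus :: "'a::euclidean_space set \<Rightarrow> ('a \<Rightarrow> real) \<Rightarrow> ereal" where
  "p_minus E p = - ess_sup_on E (\<lambda>x. - ereal (p x))"

definition conj_exp :: "('a \<Rightarrow> real) \<Rightarrow> 'a \<Rightarrow> ereal" where
  "conj_exp p x = (if p x = 1 then \<infinity> else ereal (p x / (p x - 1)))"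

definition conj_plus :: "'a::euclidean_space set \<Rightarrow> ('a \<Rightarrow> real) \<Rightarrow> ereal" where
  "conj_plus E p = ess_sup_on E (conj_exp p)"

definition sconj :: "ereal \<Rightarrow> real" where
  "sconj s = (if s = \<infinity> then 1 else real_of_ereal s / (real_of_ereal s - 1))"

definition modular :: "'a::euclidean_space set \<Rightarrow> ('a \<Rightarrow> real) \<Rightarrow> ('a \<Rightarrow> ennreal) \<Rightarrow> real \<Rightarrow> ennreal" where
  "modular E p g lam = (\<integral>\<^sup>+ x \<in> E. (if g x = \<infinity> then \<infinity>
        else ennreal ((enn2real (g x) / lam) powr p x)) \<partial>lebesgue)"

text \<open>Luxemburg norm (value \<infinity> if no admissible \<lambda> exists).\<close>
definition lux_norm :: "'a::euclidean_space set \<Rightarrow> ('a \<Rightarrow> real) \<Rightarrow> ('a \<Rightarrow> ennreal) \<Rightarrow> ennreal" where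
  "lux_norm E p g = Inf {ennreal lam | lam. lam > 0 \<and> modular E p g lam \<le> 1}"

definition var_Lp :: "'a::euclidean_space set \<Rightarrow> ('a \<Rightarrow> real) \<Rightarrow> ('a \<Rightarrow> real) set" where
  "var_Lp E p = {f. set_borel_measurable lebesgue E f \<and>
      (\<exists>lam>0. modular E p (\<lambda>x. ennreal \<bar>f x\<bar>) lam < \<infinity>)}"

definition M_Omega :: "'a::euclidean_space set \<Rightarrow> ('a \<Rightarrow> real) \<Rightarrow> ('a \<Rightarrow> real) \<Rightarrow> 'a \<Rightarrow> ennreal" where
  "M_Omega E \<Omega> f x = (SUP r\<in>{0<..}. (\<integral>\<^sup>+ y \<in> ball x r \<inter> E. ennreal (\<bar>\<Omega> (x - y)\<bar> * \<bar>f y\<bar>) \<partial>lebesgue)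
                                     / emeasure lebesgue (ball x r))"

definition HL_max :: "'a::euclidean_space set \<Rightarrow> ('a \<Rightarrow> real) \<Rightarrow> 'a \<Rightarrow> ennreal" where
  "HL_max E f = M_Omega E (\<lambda>_. 1) f"

definition P_log :: "'a::euclidean_space set \<Rightarrow> ('a \<Rightarrow> real) \<Rightarrow> bool" where
  "P_log E p \<longleftrightarrow> set_borel_measurable lebesgue E p \<and> 1 \<le> p_minus E p \<and> p_plus E p < \<infinity> \<and>
     (\<exists>C. \<forall>x\<in>E. \<forall>y\<in>E. dist x y \<le> 1/2 \<longrightarrow> \<bar>p x - p y\<bar> \<le> - C / ln (dist x y))"

definition B_class :: "'a::euclidean_space set \<Rightarrow> ('a \<Rightarrow> real) \<Rightarrow> bool" where
  "B_class E p \<longleftrightarrow> P_log E p \<and>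
     (\<exists>C::real. \<forall>f\<in>var_Lp E p. lux_norm E p (HL_max E f)
                 \<le> ennreal C * lux_norm E p (\<lambda>x. ennreal \<bar>f x\<bar>))"

text \<open>Surface measure on S^{n-1}: \<sigma>(A) = n |{t x : 0<t<1, x\<in>A}| (cone construction).\<close>
definition sphere_measure :: "'a::euclidean_space measure" where
  "sphere_measure = scale_measure (of_nat DIM('a))
     (distr (restrict_space lebesgue (ball 0 1 - {0})) (restrict_space borel (sphere 0 1))
        (\<lambda>x. x /\<^sub>R norm x))"

definition Ls_sphere :: "ereal \<Rightarrow> ('a::euclidean_space \<Rightarrow> real) \<Rightarrow> bool" where
  "Ls_sphere s \<Omega> \<longleftrightarrow> \<Omega> \<in> borel_measurable sphere_measure \<and>
     (if s = \<infinity> then esssup sphere_measure (\<lambda>x. ereal \<bar>\<Omega> x\<bar>) < \<infinity>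
      else (\<integral>\<^sup>+ x. ennreal (\<bar>\<Omega> x\<bar> powr real_of_ereal s) \<partial>sphere_measure) < \<infinity>)"

end

theory Submission
  imports Defs
begin


lemma modular_le:
  assumes "AE x in lebesgue. x \<in> E \<longrightarrow> (g x = \<infinity> \<longrightarrow> h x = \<infinity>) \<and>
      (h x \<noteq> \<infinity> \<longrightarrow> (enn2real (g x) / a) powr p x \<le> (enn2real (h x) / b) powr p' x)"
  shows "modular E p g a \<le> modular E p' h b"
  unfolding modular_def
proof (rule nn_integral_mono_AE)
  show "AE x in lebesgue. (if g x = \<infinity> then \<infinity> else ennreal ((enn2real (g x) / a) powr p x)) * indicator E x
      \<le> (if h x = \<infinity> then \<infinity> else ennreal ((enn2real (h x) / b) powr p' x)) * indicator E x"
    using assms by eventually_elim (auto split: split_indicator intro: ennreal_leI)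
qed

lemma lux_le: "lam > 0 \<Longrightarrow> modular E p g lam \<le> 1 \<Longrightarrow> lux_norm E p g \<le> ennreal lam"
  unfolding lux_norm_def by (rule Inf_lower) auto

lemma lux_lt:
  assumes "AE x in lebesgue. x \<in> E \<longrightarrow> p x \<ge> 0" and "lux_norm E p g < ennreal mu"
  shows "modular E p g mu \<le> 1"
proof -
  from assms(2) obtain lam where lam: "lam > 0" "modular E p g lam \<le> 1" "ennreal lam < ennreal mu"
    unfolding lux_norm_def Inf_less_iff by auto
  hence "lam < mu" using ennreal_less_iff by (metis ennreal_le_iff less_le_not_le linorder_le_less_linear order_less_imp_le)
  have "modular E p g mu \<le> modular E p g lam"
    apply (rule modular_le)
    using assms(1) apply eventually_elim
    using \<open>lam < mu\<close> lam(1) by (auto intro!: powr_mono2 divide_left_mono)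
  thus ?thesis using lam by simp
qed

lemma le_cmult_Inf:
  fixes x :: ennreal
  assumes "c > 0" "\<And>l. l \<in> S \<Longrightarrow> x \<le> ennreal c * l"
  shows "x \<le> ennreal c * Inf S"
proof -
  have "x / ennreal c \<le> Inf S"
  proof (rule Inf_greatest)
    fix l assume "l \<in> S"
    hence "x \<le> ennreal c * l" by (rule assms(2))
    thus "x / ennreal c \<le> l" using assms(1)
      by (intro divide_le_posI_ennreal) auto
  qed
  hence "ennreal c * (x / ennreal c) \<le> ennreal c * Inf S" by (rule mult_left_mono) simp
  moreover have "ennreal c * (x / ennreal c) = x" using assms(1)
    using mult_divide_eq_ennreal[of "ennreal c" x] by (simp add: ennreal_times_divide mult.commute)
  ultimately show ?thesis by simp
qed



definition rootq :: "real \<Rightarrow> ennreal \<Rightarrow> ennreal" where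
  "rootq q g = (if g = \<infinity> then \<infinity> else ennreal (enn2real g powr (1/q)))"

lemma pminus_AE:
  assumes "1 \<le> p_minus E p" "E \<in> sets lebesgue"
  shows "AE x in lebesgue. x \<in> E \<longrightarrow> 1 \<le> p x"
proof -
  let ?S = "esssup (restrict_space lebesgue E) (\<lambda>x. - ereal (p x))"
  have S: "?S \<le> -1" using assms(1) unfolding p_minus_def ess_sup_on_def
    by (metis ereal_minus_le_minus ereal_uminus_uminus)
  have "AE x in restrict_space lebesgue E. - ereal (p x) \<le> ?S" by (rule esssup_AE)
  hence "AE x in restrict_space lebesgue E. 1 \<le> p x"
  proof eventually_elim
    case (elim x)
    have m: "(-1::ereal) = ereal (-1)" by (simp add: one_ereal_def)
    have "ereal (- p x) \<le> ereal (-1)" using order_trans[OF elim S] unfolding m by simp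
    hence "- p x \<le> -1" by (simp only: ereal_less_eq)
    thus ?case by simp
  qed
  thus ?thesis using assms(2) by (subst (asm) AE_restrict_space_iff) auto
qed

lemma sconj_ge1: "1 < s \<Longrightarrow> sconj s \<ge> 1"
  unfolding sconj_def
  by (cases s) auto

lemma main_assembly:
  fixes E :: "'a::euclidean_space set" and p :: "'a \<Rightarrow> real" and q :: real
    and MO :: "('a \<Rightarrow> real) \<Rightarrow> 'a \<Rightarrow> ennreal"
  assumes q: "q \<ge> 1" and Emeas: "E \<in> sets lebesgue"
    and B: "B_class E (\<lambda>x. p x / q)"
    and pw: "\<And>f x. set_borel_measurable lebesgue E f \<Longrightarrow>
               MO f x \<le> ennreal K * rootq q (HL_max E (\<lambda>y. \<bar>f y\<bar> powr q) x)"
    and K: "K > 0"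
  shows "\<exists>C::real. \<forall>f\<in>var_Lp E p.
           lux_norm E p (MO f) \<le> ennreal C * lux_norm E p (\<lambda>x. ennreal \<bar>f x\<bar>)"
proof -
  from B obtain C1 where C1: "\<forall>f\<in>var_Lp E (\<lambda>x. p x / q). lux_norm E (\<lambda>x. p x / q) (HL_max E f)
                 \<le> ennreal C1 * lux_norm E (\<lambda>x. p x / q) (\<lambda>x. ennreal \<bar>f x\<bar>)"
    and Plog: "P_log E (\<lambda>x. p x / q)" unfolding B_class_def by blast
  have pq: "AE x in lebesgue. x \<in> E \<longrightarrow> 1 \<le> p x / q"
    using Plog Emeas unfolding P_log_def by (intro pminus_AE) auto
  have pAE: "AE x in lebesgue. x \<in> E \<longrightarrow> q \<le> p x"
    using pq by eventually_elim (use q in \<open>auto simp: field_simps\<close>)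
  have p0: "AE x in lebesgue. x \<in> E \<longrightarrow> 0 \<le> p x" 
    using pAE by eventually_elim (use q in auto)
  have pq0: "AE x in lebesgue. x \<in> E \<longrightarrow> 0 \<le> p x / q" 
    using pq by eventually_elim auto
  define C1' where "C1' = max C1 0"
  define C where "C = K * (C1' + 1) powr (1/q)"
  have Cpos: "C > 0" unfolding C_def C1'_def using K by auto
  show ?thesis
  proof (intro exI ballI)
    fix f assume f: "f \<in> var_Lp E p"
    have fm: "set_borel_measurable lebesgue E f" using f unfolding var_Lp_def by auto
    let ?fq = "\<lambda>y. \<bar>f y\<bar> powr q"
    let ?G = "HL_max E ?fq"
    have key: "lux_norm E p (MO f) \<le> ennreal C * l"
      if l: "l \<in> {ennreal lam | lam. lam > 0 \<and> modular E p (\<lambda>x. ennreal \<bar>f x\<bar>) lam \<le> 1}" for l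
    proof -
      from l obtain lam where lam: "l = ennreal lam" "lam > 0"
        "modular E p (\<lambda>x. ennreal \<bar>f x\<bar>) lam \<le> 1" by auto
      have m1: "modular E (\<lambda>x. p x / q) (\<lambda>x. ennreal \<bar>?fq x\<bar>) (lam powr q)
                \<le> modular E p (\<lambda>x. ennreal \<bar>f x\<bar>) lam"
        apply (rule modular_le)
        using pAE apply eventually_elim
        using q lam(2) by (auto simp: powr_divide[symmetric] powr_powr)
      have fqm: "set_borel_measurable lebesgue E ?fq"
      proof -
        have eq: "(\<lambda>x. indicator E x *\<^sub>R ?fq x) = (\<lambda>x. \<bar>indicator E x *\<^sub>R f x\<bar> powr q)"
          by (auto simp: indicator_def fun_eq_iff)
        show ?thesis using fm unfolding set_borel_measurable_def eq by measurable
      qed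
      have lq: "lam powr q > 0" using lam by simp
      have fqV: "?fq \<in> var_Lp E (\<lambda>x. p x / q)"
        unfolding var_Lp_def using fqm m1 lam(3) lq
        by (auto intro!: exI[of _ "lam powr q"] simp: order_le_less_trans[OF _ ennreal_one_less_top] )
      have "lux_norm E (\<lambda>x. p x / q) ?G \<le> ennreal C1 * lux_norm E (\<lambda>x. p x / q) (\<lambda>x. ennreal \<bar>?fq x\<bar>)"
        using C1 fqV by blast
      also have "\<dots> \<le> ennreal C1' * ennreal (lam powr q)"
        by (intro mult_mono lux_le[OF lq] order_trans[OF m1 lam(3)]) (auto simp: C1'_def ennreal_leI)
      also have "\<dots> = ennreal (C1' * lam powr q)" unfolding C1'_def by (simp add: ennreal_mult)
      also have "\<dots> < ennreal ((C1' + 1) * lam powr q)"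
        using lq unfolding C1'_def by (intro ennreal_lessI) (auto simp: field_simps intro: add_pos_nonneg)
      finally have mG: "modular E (\<lambda>x. p x / q) ?G ((C1' + 1) * lam powr q) \<le> 1"
        by (rule lux_lt[OF pq0])
      define mu where "mu = (C1' + 1) * lam powr q"
      have mu: "mu > 0" unfolding mu_def C1'_def using lq by (intro mult_pos_pos) auto
      have m2: "modular E p (\<lambda>x. rootq q (?G x)) (mu powr (1/q)) \<le> modular E (\<lambda>x. p x / q) ?G mu"
        apply (rule modular_le)
        using p0 apply eventually_elim
        using q mu by (auto simp: rootq_def powr_divide[symmetric] powr_powr)
      have m3: "modular E p (MO f) (K * mu powr (1/q)) \<le> modular E p (\<lambda>x. rootq q (?G x)) (mu powr (1/q))"
      proof (rule modular_le)
        show "AE x in lebesgue. x \<in> E \<longrightarrow> (MO f x = \<infinity> \<longrightarrow> rootq q (?G x) = \<infinity>) \<and>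
           (rootq q (?G x) \<noteq> \<infinity> \<longrightarrow> (enn2real (MO f x) / (K * mu powr (1/q))) powr p x
              \<le> (enn2real (rootq q (?G x)) / mu powr (1/q)) powr p x)"
          using p0
        proof eventually_elim
          case (elim x)
          have le: "MO f x \<le> ennreal K * rootq q (?G x)" by (rule pw[OF fm])
          show ?case
          proof (intro impI conjI)
            assume "MO f x = \<infinity>"
            thus "rootq q (?G x) = \<infinity>" using le
              by (metis ennreal_mult_eq_top_iff ennreal_neq_top infinity_ennreal_def top.extremum_uniqueI)
          next
            assume x: "x \<in> E" and fin: "rootq q (?G x) \<noteq> \<infinity>"
            have "enn2real (MO f x) \<le> enn2real (ennreal K * rootq q (?G x))"
              using le fin by (intro enn2real_mono) (auto simp: ennreal_mult_less_top top.not_eq_extremum)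
            also have "\<dots> = K * enn2real (rootq q (?G x))" using K by (simp add: enn2real_mult)
            finally have a: "enn2real (MO f x) \<le> K * enn2real (rootq q (?G x))" .
            have "(enn2real (MO f x) / (K * mu powr (1/q))) powr p x
                \<le> (K * enn2real (rootq q (?G x)) / (K * mu powr (1/q))) powr p x"
              using a elim x K mu by (intro powr_mono2 divide_right_mono) auto
            also have "\<dots> = (enn2real (rootq q (?G x)) / mu powr (1/q)) powr p x" using K by simp
            finally show "(enn2real (MO f x) / (K * mu powr (1/q))) powr p x
                \<le> (enn2real (rootq q (?G x)) / mu powr (1/q)) powr p x" .
          qed
        qed
      qed
      have Kmu: "K * mu powr (1/q) > 0" using K mu by simp
      have "lux_norm E p (MO f) \<le> ennreal (K * mu powr (1/q))"
        using m3 m2 mG unfolding mu_def[symmetric] by (intro lux_le[OF Kmu]) simp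
      also have "K * mu powr (1/q) = C * lam"
        unfolding mu_def C_def using lam q C1'_def
        by (simp add: powr_mult powr_powr)
      finally show ?thesis using lam Cpos by (simp add: ennreal_mult)
    qed
    show "lux_norm E p (MO f) \<le> ennreal C * lux_norm E p (\<lambda>x. ennreal \<bar>f x\<bar>)"
      unfolding lux_norm_def[of E p "\<lambda>x. ennreal \<bar>f x\<bar>"]
      by (rule le_cmult_Inf[OF Cpos key])
  qed
qed



lemma scaling_lemma:
  fixes g :: "'a::euclidean_space \<Rightarrow> ennreal" and x :: 'a
  assumes g[measurable]: "g \<in> borel_measurable borel" and r: "r > 0"
  shows "(\<integral>\<^sup>+ y. g (x - y) * indicator (ball x r) y \<partial>lborel)
       = ennreal (r ^ DIM('a)) * (\<integral>\<^sup>+ z. g (r *\<^sub>R z) * indicator (ball 0 1) z \<partial>lborel)"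
proof -
  have [measurable]: "ball (0::'a) 1 \<in> sets borel" by simp
  have eq: "lborel = density (distr lborel borel (\<lambda>z. x + (-r) *\<^sub>R z)) (\<lambda>_. \<bar>-r\<bar>^DIM('a))"
    by (rule lborel_affine) (use r in auto)
  have "(\<integral>\<^sup>+ y. g (x - y) * indicator (ball x r) y \<partial>lborel)
      = (\<integral>\<^sup>+ y. g (x - y) * indicator (ball x r) y \<partial>(density (distr lborel borel (\<lambda>z. x + (-r) *\<^sub>R z)) (\<lambda>_. \<bar>-r\<bar>^DIM('a))))"
    by (rule arg_cong[where f="\<lambda>M. nn_integral M _", OF eq])
  also have "\<dots> = (\<integral>\<^sup>+ z. ennreal (r ^ DIM('a)) * (g (r *\<^sub>R z) * indicator (ball 0 1) z) \<partial>lborel)"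
    using r
    by (simp add: nn_integral_density nn_integral_distr dist_norm indicator_def)
  also have "\<dots> = ennreal (r ^ DIM('a)) * (\<integral>\<^sup>+ z. g (r *\<^sub>R z) * indicator (ball 0 1) z \<partial>lborel)"
    by (rule nn_integral_cmult) measurable
  finally show ?thesis .
qed




lemma sets_sphere_measure: "sets (sphere_measure :: 'a::euclidean_space measure) = sets (restrict_space borel (sphere (0::'a) 1))"
  unfolding sphere_measure_def by simp

lemma Omega_eq:
  fixes \<Omega> :: "'a::euclidean_space \<Rightarrow> real"
  assumes hom: "\<And>x t. t > 0 \<Longrightarrow> \<Omega> (t *\<^sub>R x) = \<Omega> x" and "z \<noteq> 0"
  shows "\<Omega> (z /\<^sub>R norm z) = \<Omega> z"
  using hom[of "inverse (norm z)" z] assms(2) by simp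

lemma Omega_borel:
  fixes \<Omega> :: "'a::euclidean_space \<Rightarrow> real"
  assumes hom: "\<And>x t. t > 0 \<Longrightarrow> \<Omega> (t *\<^sub>R x) = \<Omega> x"
    and m: "\<Omega> \<in> borel_measurable sphere_measure"
  shows "\<Omega> \<in> borel_measurable borel"
proof -
  have m1: "\<Omega> \<in> borel_measurable (restrict_space borel (sphere (0::'a) 1))"
    using m measurable_cong_sets[OF sets_sphere_measure refl] by blast
  have nrm: "(\<lambda>z::'a. z /\<^sub>R norm z) \<in> measurable (restrict_space borel (- {0})) (restrict_space borel (sphere 0 1))"
  proof (rule measurable_restrict_space2)
    show "(\<lambda>z::'a. z /\<^sub>R norm z) \<in> space (restrict_space borel (- {0})) \<rightarrow> sphere 0 1"
      by (auto simp: space_restrict_space)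
    show "(\<lambda>z::'a. z /\<^sub>R norm z) \<in> borel_measurable (restrict_space borel (- {0}))"
      by (rule measurable_restrict_space1) measurable
  qed
  have m2: "(\<lambda>z. \<Omega> (z /\<^sub>R norm z)) \<in> borel_measurable (restrict_space borel (- {0::'a}))"
    by (rule measurable_compose[OF nrm m1])
  have m3: "\<Omega> \<in> borel_measurable (restrict_space borel (- {0::'a}))"
    by (rule measurable_cong[THEN iffD1, OF _ m2]) (auto simp: space_restrict_space Omega_eq[OF hom])
  have m4: "(\<lambda>z. indicator (- {0::'a}) z *\<^sub>R \<Omega> z) \<in> borel_measurable borel"
    using m3 by (subst (asm) borel_measurable_restrict_space_iff) auto
  have eq: "\<Omega> = (\<lambda>z. indicator (- {0::'a}) z *\<^sub>R \<Omega> z + indicator {0} z * \<Omega> 0)"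
    by (auto simp: fun_eq_iff indicator_def)
  show ?thesis by (subst eq) (use m4 in measurable)
qed



lemma sphere_integral:
  fixes \<Omega> :: "'a::euclidean_space \<Rightarrow> real" and h :: "real \<Rightarrow> ennreal"
  assumes hom: "\<And>x t. t > 0 \<Longrightarrow> \<Omega> (t *\<^sub>R x) = \<Omega> x"
    and m: "\<Omega> \<in> borel_measurable sphere_measure"
    and h[measurable]: "h \<in> borel_measurable borel"
  shows "(\<integral>\<^sup>+ w. h (\<Omega> w) \<partial>(sphere_measure::'a measure))
       = of_nat DIM('a) * (\<integral>\<^sup>+ z. h (\<Omega> z) * indicator (ball 0 1) z \<partial>lborel)"
proof -
  have OB[measurable]: "\<Omega> \<in> borel_measurable borel" by (rule Omega_borel[OF hom m])
  have m1: "\<Omega> \<in> borel_measurable (restrict_space borel (sphere (0::'a) 1))"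
    using m measurable_cong_sets[OF sets_sphere_measure refl] by blast
  have [measurable]: "ball (0::'a) 1 \<in> sets borel" by simp
  let ?D = "restrict_space lebesgue (ball (0::'a) 1 - {0})"
  have Dsets: "(ball (0::'a) 1 - {0}) \<inter> space lebesgue \<in> sets lebesgue" by simp
  have nrm: "(\<lambda>z::'a. z /\<^sub>R norm z) \<in> measurable ?D (restrict_space borel (sphere 0 1))"
  proof (rule measurable_restrict_space2)
    show "(\<lambda>z::'a. z /\<^sub>R norm z) \<in> space ?D \<rightarrow> sphere 0 1"
      by (auto simp: space_restrict_space)
    have "(\<lambda>z::'a. z /\<^sub>R norm z) \<in> borel_measurable lebesgue"
      by (rule measurable_completion) measurable
    thus "(\<lambda>z::'a. z /\<^sub>R norm z) \<in> borel_measurable ?D"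
      by (rule measurable_restrict_space1)
  qed
  have hm: "(\<lambda>w. h (\<Omega> w)) \<in> borel_measurable (restrict_space borel (sphere (0::'a) 1))"
    using m1 by measurable
  have "(\<integral>\<^sup>+ w. h (\<Omega> w) \<partial>(sphere_measure::'a measure))
      = of_nat DIM('a) * (\<integral>\<^sup>+ w. h (\<Omega> w) \<partial>distr ?D (restrict_space borel (sphere 0 1)) (\<lambda>x. x /\<^sub>R norm x))"
    unfolding sphere_measure_def
    by (rule nn_integral_scale_measure) (use hm measurable_cong_sets in auto)
  also have "(\<integral>\<^sup>+ w. h (\<Omega> w) \<partial>distr ?D (restrict_space borel (sphere 0 1)) (\<lambda>x. x /\<^sub>R norm x))
      = (\<integral>\<^sup>+ z. h (\<Omega> (z /\<^sub>R norm z)) \<partial>?D)"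
    by (rule nn_integral_distr[OF nrm]) (use hm measurable_cong_sets in auto)
  also have "\<dots> = (\<integral>\<^sup>+ z. h (\<Omega> (z /\<^sub>R norm z)) * indicator (ball 0 1 - {0}) z \<partial>lebesgue)"
    by (rule nn_integral_restrict_space[OF Dsets])
  also have "\<dots> = (\<integral>\<^sup>+ z. h (\<Omega> z) * indicator (ball 0 1) z \<partial>lebesgue)"
  proof (rule nn_integral_cong_AE)
    have "{0::'a} \<in> null_sets lebesgue" by simp
    hence "AE z in lebesgue. z \<noteq> (0::'a)" by (rule AE_not_in[of "{0}", simplified])
    thus "AE z in lebesgue. h (\<Omega> (z /\<^sub>R norm z)) * indicator (ball 0 1 - {0}) z = h (\<Omega> z) * indicator (ball 0 1) z"
      by eventually_elim (auto simp: Omega_eq[OF hom] indicator_def)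
  qed
  also have "\<dots> = (\<integral>\<^sup>+ z. h (\<Omega> z) * indicator (ball 0 1) z \<partial>lborel)"
    by (rule nn_integral_completion)
  finally show ?thesis .
qed



lemma V_ball: "r > 0 \<Longrightarrow> emeasure lebesgue (ball (x::'a::euclidean_space) r) = ennreal (unit_ball_vol (DIM('a)) * r ^ DIM('a))"
proof -
  assume r: "r > 0"
  have "emeasure lebesgue (ball x r) = (\<integral>\<^sup>+ y. indicator (ball x r) y \<partial>lebesgue)" by simp
  also have "\<dots> = (\<integral>\<^sup>+ y. indicator (ball x r) y \<partial>lborel)" by (rule nn_integral_completion)
  also have "\<dots> = emeasure lborel (ball x r)" by simp
  finally show ?thesis using emeasure_ball[of r x] r by simp
qed

lemma fq_meas:
  assumes fm: "set_borel_measurable lebesgue E f" and Em: "E \<in> sets lebesgue" and that: "A \<in> sets lebesgue"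
  shows "(\<lambda>y. ennreal (\<bar>f y\<bar> powr q) * indicator (A \<inter> E) y) \<in> borel_measurable lebesgue"
proof -
  have eq: "(\<lambda>y. ennreal (\<bar>f y\<bar> powr q) * indicator (A \<inter> E) y)
    = (\<lambda>y. ennreal (\<bar>indicator E y *\<^sub>R f y\<bar> powr q) * indicator A y)"
    by (auto simp: fun_eq_iff indicator_def)
  show ?thesis using fm that unfolding set_borel_measurable_def eq by measurable
qed



lemma ball_inf:
  fixes x :: "'a::euclidean_space"
  assumes fm: "set_borel_measurable lebesgue E f" and Em: "E \<in> sets lebesgue" and K0: "K0 \<ge> 0"
    and AE: "AE y in lebesgue. y \<in> ball x r \<longrightarrow> \<bar>\<Omega> (x - y)\<bar> \<le> K0"
  shows "(\<integral>\<^sup>+ y \<in> ball x r \<inter> E. ennreal (\<bar>\<Omega> (x-y)\<bar> * \<bar>f y\<bar>) \<partial>lebesgue) / emeasure lebesgue (ball x r)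
      \<le> ennreal (K0 + 1) * ((\<integral>\<^sup>+ y \<in> ball x r \<inter> E. ennreal (\<bar>f y\<bar> powr 1) \<partial>lebesgue) / emeasure lebesgue (ball x r))"
proof -
  let ?J = "\<integral>\<^sup>+ y \<in> ball x r \<inter> E. ennreal (\<bar>f y\<bar> powr 1) \<partial>lebesgue"
  have "(\<integral>\<^sup>+ y \<in> ball x r \<inter> E. ennreal (\<bar>\<Omega> (x-y)\<bar> * \<bar>f y\<bar>) \<partial>lebesgue)
     \<le> (\<integral>\<^sup>+ y. ennreal K0 * (ennreal (\<bar>f y\<bar> powr 1) * indicator (ball x r \<inter> E) y) \<partial>lebesgue)"
    using AE
  proof (intro nn_integral_mono_AE, eventually_elim)
    case (elim y)
    show ?case
    proof (cases "y \<in> ball x r \<inter> E")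
      case True
      hence "\<bar>\<Omega> (x-y)\<bar> * \<bar>f y\<bar> \<le> K0 * \<bar>f y\<bar>" using elim by (intro mult_right_mono) auto
      hence "ennreal (\<bar>\<Omega> (x-y)\<bar> * \<bar>f y\<bar>) \<le> ennreal K0 * ennreal \<bar>f y\<bar>"
        using K0 by (simp add: ennreal_mult[symmetric] ennreal_leI)
      thus ?thesis using True by simp
    qed simp
  qed
  also have "\<dots> = ennreal K0 * ?J"
    by (rule nn_integral_cmult) (rule fq_meas[OF fm Em], simp)
  also have "\<dots> \<le> ennreal (K0 + 1) * ?J"
    by (intro mult_right_mono ennreal_leI) auto
  finally have "(\<integral>\<^sup>+ y \<in> ball x r \<inter> E. ennreal (\<bar>\<Omega> (x-y)\<bar> * \<bar>f y\<bar>) \<partial>lebesgue) / emeasure lebesgue (ball x r)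
      \<le> ennreal (K0 + 1) * ?J / emeasure lebesgue (ball x r)"
    by (rule divide_right_mono_ennreal)
  thus ?thesis by (simp add: ennreal_times_divide)
qed



lemma young_pt:
  fixes a b t \<sigma> q :: real
  assumes "\<sigma> > 1" "q = \<sigma> / (\<sigma> - 1)" "t > 0" "a \<ge> 0" "b \<ge> 0"
  shows "a * b \<le> t powr \<sigma> / \<sigma> * a powr \<sigma> + 1 / (q * t powr q) * b powr q"
proof -
  have q1: "q > 1" unfolding assms(2) using assms(1) by (simp add: less_divide_eq)
  have sq: "1/\<sigma> + 1/q = 1" unfolding assms(2) using assms(1) by (simp add: field_simps)
  have "(t * a) * (b / t) \<le> (t * a) powr \<sigma> / \<sigma> + (b / t) powr q / q"
    by (rule Youngs_inequality) (use assms q1 sq in auto)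
  also have "(t * a) powr \<sigma> = t powr \<sigma> * a powr \<sigma>" using assms by (simp add: powr_mult)
  also have "(b / t) powr q = b powr q / t powr q" using assms by (simp add: powr_divide)
  finally show ?thesis using assms(3) by (simp add: field_simps)
qed

lemma real_alg:
  fixes w v c0 \<sigma> q :: real
  assumes "\<sigma> > 1" "q = \<sigma> / (\<sigma> - 1)" "w > 0" "v > 0" "c0 \<ge> 0"
  defines "t \<equiv> w powr (1 / (\<sigma> * q))"
  shows "(t powr \<sigma> / \<sigma> * (c0 * v) + 1 / (q * t powr q) * (w * v)) / v
        \<le> (c0 / \<sigma> + 1 / q + 1) * w powr (1 / q)"
proof -
  have q1: "q > 1" unfolding assms(2) using assms(1) by (simp add: less_divide_eq)
  have ts: "t powr \<sigma> = w powr (1/q)" unfolding t_def using assms(1) q1 by (simp add: powr_powr)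
  have tq: "t powr q = w powr (1/\<sigma>)" unfolding t_def using assms(1) q1 by (simp add: powr_powr)
  have wq: "w / w powr (1/\<sigma>) = w powr (1/q)"
  proof -
    have "1/q = 1 - 1/\<sigma>" unfolding assms(2) using assms(1) by (simp add: field_simps)
    thus ?thesis using assms(3) by (simp add: powr_diff)
  qed
  have "(t powr \<sigma> / \<sigma> * (c0 * v) + 1 / (q * t powr q) * (w * v)) / v
      = w powr (1/q) / \<sigma> * c0 + (w / w powr (1/\<sigma>)) / q"
    unfolding ts tq using assms(4) by (simp add: field_simps)
  also have "\<dots> = (c0 / \<sigma> + 1 / q) * w powr (1 / q)" unfolding wq by (simp add: field_simps)
  also have "\<dots> \<le> (c0 / \<sigma> + 1 / q + 1) * w powr (1 / q)"
    by (intro mult_right_mono) auto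
  finally show ?thesis .
qed



lemma ball_fin:
  fixes x :: "'a::euclidean_space" and \<Omega> :: "'a \<Rightarrow> real"
  assumes fm: "set_borel_measurable lebesgue E f" and Em: "E \<in> sets lebesgue"
    and \<sigma>: "\<sigma> > 1" and q: "q = \<sigma> / (\<sigma> - 1)" and OB[measurable]: "\<Omega> \<in> borel_measurable borel"
    and V: "emeasure lebesgue (ball x r) = ennreal v" and v: "v > 0" and c0: "c0 \<ge> 0"
    and A: "(\<integral>\<^sup>+ y. ennreal (\<bar>\<Omega> (x-y)\<bar> powr \<sigma>) * indicator (ball x r) y \<partial>lebesgue) \<le> ennreal (c0 * v)"
  shows "(\<integral>\<^sup>+ y \<in> ball x r \<inter> E. ennreal (\<bar>\<Omega> (x-y)\<bar> * \<bar>f y\<bar>) \<partial>lebesgue) / emeasure lebesgue (ball x r)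
      \<le> ennreal (c0/\<sigma> + 1/q + 1) * rootq q ((\<integral>\<^sup>+ y \<in> ball x r \<inter> E. ennreal (\<bar>f y\<bar> powr q) \<partial>lebesgue) / emeasure lebesgue (ball x r))"
proof -
  define K where "K = c0/\<sigma> + 1/q + 1"
  have q1: "q > 1" unfolding q using \<sigma> by (simp add: less_divide_eq)
  have Kpos: "K > 0" unfolding K_def using c0 \<sigma> q1 by (intro add_nonneg_pos) auto
  let ?I = "\<integral>\<^sup>+ y \<in> ball x r \<inter> E. ennreal (\<bar>\<Omega> (x-y)\<bar> * \<bar>f y\<bar>) \<partial>lebesgue"
  let ?J = "\<integral>\<^sup>+ y \<in> ball x r \<inter> E. ennreal (\<bar>f y\<bar> powr q) \<partial>lebesgue"
  have Jm: "(\<lambda>y. ennreal (\<bar>f y\<bar> powr q) * indicator (ball x r \<inter> E) y) \<in> borel_measurable lebesgue"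
    by (rule fq_meas[OF fm Em]) simp
  show ?thesis
  proof (cases "?J = \<infinity>")
    case True
    hence "rootq q (?J / emeasure lebesgue (ball x r)) = \<infinity>"
      unfolding V rootq_def by (simp add: ennreal_divide_eq_top_iff)
    hence "ennreal K * rootq q (?J / emeasure lebesgue (ball x r)) = \<infinity>"
      using Kpos by (simp add: ennreal_mult_top)
    thus ?thesis unfolding K_def by simp
  next
    case Jfin: False
    show ?thesis
    proof (cases "?J = 0")
      case True
      hence "AE y in lebesgue. ennreal (\<bar>f y\<bar> powr q) * indicator (ball x r \<inter> E) y = 0"
        using nn_integral_0_iff_AE[OF Jm] by simp
      hence AE0: "AE y in lebesgue. ennreal (\<bar>\<Omega> (x-y)\<bar> * \<bar>f y\<bar>) * indicator (ball x r \<inter> E) y \<le> 0"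
      proof eventually_elim
        case (elim y)
        thus ?case using q1 by (auto simp: indicator_def split: if_splits)
      qed
      have "?I \<le> 0"
        using nn_integral_mono_AE[OF AE0] by simp
      thus ?thesis unfolding K_def by simp
    next
      case Jne0: False
      obtain j where j: "?J = ennreal j" "j \<ge> 0" using Jfin by (cases ?J) auto
      have jpos: "j > 0" using Jne0 j by (cases "j = 0") auto
      define w where "w = j / v"
      have w: "w > 0" unfolding w_def using jpos v by simp
      define t where "t = w powr (1 / (\<sigma> * q))"
      have t: "t > 0" unfolding t_def using w by simp
      define c1 where "c1 = t powr \<sigma> / \<sigma>"
      define c2 where "c2 = 1 / (q * t powr q)"
      have c12: "c1 \<ge> 0" "c2 \<ge> 0" unfolding c1_def c2_def using \<sigma> q1 t by auto
      have Om: "(\<lambda>y. ennreal (\<bar>\<Omega> (x-y)\<bar> powr \<sigma>) * indicator (ball x r) y) \<in> borel_measurable lebesgue"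
      proof -
        have [measurable]: "ball x r \<in> sets borel" by simp
        have "(\<lambda>y. ennreal (\<bar>\<Omega> (x-y)\<bar> powr \<sigma>) * indicator (ball x r) y) \<in> borel_measurable lborel"
          by measurable
        thus ?thesis by (rule measurable_completion)
      qed
      have "?I \<le> (\<integral>\<^sup>+ y. ennreal c1 * (ennreal (\<bar>\<Omega> (x-y)\<bar> powr \<sigma>) * indicator (ball x r) y)
                   + ennreal c2 * (ennreal (\<bar>f y\<bar> powr q) * indicator (ball x r \<inter> E) y) \<partial>lebesgue)"
      proof (intro nn_integral_mono)
        fix y
        show "ennreal (\<bar>\<Omega> (x-y)\<bar> * \<bar>f y\<bar>) * indicator (ball x r \<inter> E) y
           \<le> ennreal c1 * (ennreal (\<bar>\<Omega> (x-y)\<bar> powr \<sigma>) * indicator (ball x r) y)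
                   + ennreal c2 * (ennreal (\<bar>f y\<bar> powr q) * indicator (ball x r \<inter> E) y)"
        proof (cases "y \<in> ball x r \<inter> E")
          case True
          have "\<bar>\<Omega> (x-y)\<bar> * \<bar>f y\<bar> \<le> c1 * \<bar>\<Omega> (x-y)\<bar> powr \<sigma> + c2 * \<bar>f y\<bar> powr q"
            unfolding c1_def c2_def by (rule young_pt[OF \<sigma> q t]) auto
          hence "ennreal (\<bar>\<Omega> (x-y)\<bar> * \<bar>f y\<bar>) \<le> ennreal (c1 * \<bar>\<Omega> (x-y)\<bar> powr \<sigma> + c2 * \<bar>f y\<bar> powr q)"
            by (rule ennreal_leI)
          also have "\<dots> = ennreal c1 * ennreal (\<bar>\<Omega> (x-y)\<bar> powr \<sigma>) + ennreal c2 * ennreal (\<bar>f y\<bar> powr q)"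
            using c12 by (simp add: ennreal_plus ennreal_mult)
          finally show ?thesis using True by simp
        qed simp
      qed
      also have "\<dots> = ennreal c1 * (\<integral>\<^sup>+ y. ennreal (\<bar>\<Omega> (x-y)\<bar> powr \<sigma>) * indicator (ball x r) y \<partial>lebesgue)
                     + ennreal c2 * ?J"
        using Om Jm by (simp add: nn_integral_add nn_integral_cmult)
      also have "\<dots> \<le> ennreal c1 * ennreal (c0 * v) + ennreal c2 * ennreal j"
        unfolding j by (intro add_mono mult_left_mono A) auto
      also have "\<dots> = ennreal (c1 * (c0 * v) + c2 * (w * v))"
        using c12 c0 v j unfolding w_def by (simp add: ennreal_plus ennreal_mult)
      finally have "?I / emeasure lebesgue (ball x r) \<le> ennreal (c1 * (c0 * v) + c2 * (w * v)) / ennreal v"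
        unfolding V by (rule divide_right_mono_ennreal)
      also have "\<dots> = ennreal ((c1 * (c0 * v) + c2 * (w * v)) / v)"
        using c12 c0 v w by (intro divide_ennreal) auto
      also have "\<dots> \<le> ennreal (K * w powr (1/q))"
        unfolding c1_def c2_def t_def K_def by (intro ennreal_leI real_alg[OF \<sigma> q w v c0])
      also have "\<dots> = ennreal K * rootq q (?J / emeasure lebesgue (ball x r))"
        unfolding V j rootq_def w_def using v j Kpos by (simp add: divide_ennreal ennreal_mult)
      finally show ?thesis unfolding K_def .
    qed
  qed
qed



lemma rootq_mono: "q > 0 \<Longrightarrow> a \<le> b \<Longrightarrow> rootq q a \<le> rootq q b"
  unfolding rootq_def
  by (auto intro!: ennreal_leI powr_mono2 enn2real_mono simp: top.not_eq_extremum)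

lemma rootq_1: "rootq 1 g = g"
  unfolding rootq_def by (cases g) auto

lemma sup_reduction:
  fixes E :: "'a::euclidean_space set"
  assumes q: "q > 0" and
    b: "\<And>r. r > 0 \<Longrightarrow> (\<integral>\<^sup>+ y \<in> ball x r \<inter> E. ennreal (\<bar>\<Omega> (x-y)\<bar> * \<bar>f y\<bar>) \<partial>lebesgue) / emeasure lebesgue (ball x r)
      \<le> ennreal K * rootq q ((\<integral>\<^sup>+ y \<in> ball x r \<inter> E. ennreal (\<bar>f y\<bar> powr q) \<partial>lebesgue) / emeasure lebesgue (ball x r))"
  shows "M_Omega E \<Omega> f x \<le> ennreal K * rootq q (HL_max E (\<lambda>y. \<bar>f y\<bar> powr q) x)"
  unfolding M_Omega_def
proof (rule SUP_least)
  fix r :: real assume r: "r \<in> {0<..}"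
  have "(\<integral>\<^sup>+ y \<in> ball x r \<inter> E. ennreal (\<bar>f y\<bar> powr q) \<partial>lebesgue) / emeasure lebesgue (ball x r)
      \<le> HL_max E (\<lambda>y. \<bar>f y\<bar> powr q) x"
    unfolding HL_max_def M_Omega_def using r by (intro SUP_upper2[of r]) auto
  hence "rootq q ((\<integral>\<^sup>+ y \<in> ball x r \<inter> E. ennreal (\<bar>f y\<bar> powr q) \<partial>lebesgue) / emeasure lebesgue (ball x r))
      \<le> rootq q (HL_max E (\<lambda>y. \<bar>f y\<bar> powr q) x)" by (rule rootq_mono[OF q])
  thus "(\<integral>\<^sup>+ y \<in> ball x r \<inter> E. ennreal (\<bar>\<Omega> (x-y)\<bar> * \<bar>f y\<bar>) \<partial>lebesgue) / emeasure lebesgue (ball x r)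
      \<le> ennreal K * rootq q (HL_max E (\<lambda>y. \<bar>f y\<bar> powr q) x)"
    using b[of r] r by (meson greaterThan_iff mult_left_mono order_trans zero_le)
qed



lemma pointwise_inf:
  fixes E :: "'a::euclidean_space set" and \<Omega> :: "'a \<Rightarrow> real"
  assumes Em: "E \<in> sets lebesgue" and Ls: "Ls_sphere \<infinity> \<Omega>"
    and hom: "\<And>x t. t > 0 \<Longrightarrow> \<Omega> (t *\<^sub>R x) = \<Omega> x"
  shows "\<exists>K>0. \<forall>f x. set_borel_measurable lebesgue E f \<longrightarrow>
     M_Omega E \<Omega> f x \<le> ennreal K * rootq 1 (HL_max E (\<lambda>y. \<bar>f y\<bar> powr 1) x)"
proof -
  have m: "\<Omega> \<in> borel_measurable sphere_measure"
    and S: "esssup sphere_measure (\<lambda>x. ereal \<bar>\<Omega> x\<bar>) < \<infinity>"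
    using Ls unfolding Ls_sphere_def by auto
  have OB[measurable]: "\<Omega> \<in> borel_measurable borel" by (rule Omega_borel[OF hom m])
  define S' where "S' = esssup (sphere_measure::'a measure) (\<lambda>x. ereal \<bar>\<Omega> x\<bar>)"
  define K0 where "K0 = max 0 (real_of_ereal S')"
  have K0: "K0 \<ge> 0" unfolding K0_def by simp
  have SK: "S' \<le> ereal K0" using S unfolding S'_def[symmetric] K0_def
    by (cases S') auto
  have "AE w in sphere_measure. ereal \<bar>\<Omega> w\<bar> \<le> S'" unfolding S'_def by (rule esssup_AE)
  hence AEs: "AE w in (sphere_measure::'a measure). indicator {t. K0 < \<bar>t\<bar>} (\<Omega> w) = (0::ennreal)"
  proof eventually_elim
    case (elim w)
    have "ereal \<bar>\<Omega> w\<bar> \<le> ereal K0" using order_trans[OF elim SK] .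
    thus ?case by (simp add: indicator_def)
  qed
  define h :: "real \<Rightarrow> ennreal" where "h = indicator {t. K0 < \<bar>t\<bar>}"
  have hm[measurable]: "h \<in> borel_measurable borel" unfolding h_def by measurable
  have "(\<integral>\<^sup>+ w. h (\<Omega> w) \<partial>(sphere_measure::'a measure)) = 0"
    using nn_integral_cong_AE[OF AEs] unfolding h_def by simp
  hence A0: "(\<integral>\<^sup>+ z. h (\<Omega> z) * indicator (ball 0 1) z \<partial>lborel) = 0"
    using sphere_integral[OF hom m hm] by simp
  have ae: "AE y in lebesgue. y \<in> ball x r \<longrightarrow> \<bar>\<Omega> (x - y)\<bar> \<le> K0" if r: "r > 0" for x :: 'a and r
  proof -
    have [measurable]: "ball x r \<in> sets borel" by simp
    have "(\<integral>\<^sup>+ y. h (\<Omega> (x - y)) * indicator (ball x r) y \<partial>lborel)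
        = ennreal (r ^ DIM('a)) * (\<integral>\<^sup>+ z. h (\<Omega> (r *\<^sub>R z)) * indicator (ball 0 1) z \<partial>lborel)"
      by (rule scaling_lemma[where g="\<lambda>z. h (\<Omega> z)", OF _ r]) measurable
    also have "\<dots> = 0" using A0 r by (simp add: hom)
    finally have "AE y in lborel. h (\<Omega> (x - y)) * indicator (ball x r) y = 0"
      by (subst (asm) nn_integral_0_iff_AE) auto
    hence "AE y in lebesgue. h (\<Omega> (x - y)) * indicator (ball x r) y = 0"
      by (rule AE_completion)
    thus ?thesis by eventually_elim (auto simp: h_def indicator_def split: if_splits)
  qed
  show ?thesis
  proof (intro exI[of _ "K0 + 1"] conjI allI impI)
    show "K0 + 1 > 0" using K0 by simp
    fix f :: "'a \<Rightarrow> real" and x :: 'a assume fm: "set_borel_measurable lebesgue E f"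
    show "M_Omega E \<Omega> f x \<le> ennreal (K0 + 1) * rootq 1 (HL_max E (\<lambda>y. \<bar>f y\<bar> powr 1) x)"
      by (rule sup_reduction) (use ball_inf[OF fm Em K0 ae] in \<open>auto simp: rootq_1\<close>)
  qed
qed



lemma pointwise_fin:
  fixes E :: "'a::euclidean_space set" and \<Omega> :: "'a \<Rightarrow> real"
  assumes Em: "E \<in> sets lebesgue" and \<sigma>: "\<sigma> > 1" and Ls: "Ls_sphere (ereal \<sigma>) \<Omega>"
    and hom: "\<And>x t. t > 0 \<Longrightarrow> \<Omega> (t *\<^sub>R x) = \<Omega> x"
  shows "\<exists>K>0. \<forall>f x. set_borel_measurable lebesgue E f \<longrightarrow>
     M_Omega E \<Omega> f x \<le> ennreal K * rootq (\<sigma> / (\<sigma> - 1)) (HL_max E (\<lambda>y. \<bar>f y\<bar> powr (\<sigma> / (\<sigma> - 1))) x)"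
proof -
  define q where "q = \<sigma> / (\<sigma> - 1)"
  have q1: "q > 1" unfolding q_def using \<sigma> by (simp add: less_divide_eq)
  have m: "\<Omega> \<in> borel_measurable sphere_measure"
    and S: "(\<integral>\<^sup>+ x. ennreal (\<bar>\<Omega> x\<bar> powr \<sigma>) \<partial>(sphere_measure::'a measure)) < \<infinity>"
    using Ls unfolding Ls_sphere_def by auto
  have OB[measurable]: "\<Omega> \<in> borel_measurable borel" by (rule Omega_borel[OF hom m])
  define h :: "real \<Rightarrow> ennreal" where "h = (\<lambda>t. ennreal (\<bar>t\<bar> powr \<sigma>))"
  have hm[measurable]: "h \<in> borel_measurable borel" unfolding h_def by measurable
  define A1 where "A1 = (\<integral>\<^sup>+ z. h (\<Omega> z) * indicator (ball 0 1) z \<partial>(lborel::'a measure))"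
  have "of_nat DIM('a) * A1 < \<infinity>"
    using sphere_integral[OF hom m hm] S unfolding A1_def h_def by simp
  hence "A1 < \<infinity>" by (auto simp: ennreal_mult_less_top)
  then obtain a1 where a1: "A1 = ennreal a1" "a1 \<ge> 0" by (cases A1) auto
  define u where "u = unit_ball_vol (real DIM('a))"
  have u: "u > 0" unfolding u_def by simp
  define c0 where "c0 = a1 / u"
  have c0: "c0 \<ge> 0" unfolding c0_def using a1 u by simp
  have b: "(\<integral>\<^sup>+ y \<in> ball x r \<inter> E. ennreal (\<bar>\<Omega> (x-y)\<bar> * \<bar>f y\<bar>) \<partial>lebesgue) / emeasure lebesgue (ball x r)
      \<le> ennreal (c0/\<sigma> + 1/q + 1) * rootq q ((\<integral>\<^sup>+ y \<in> ball x r \<inter> E. ennreal (\<bar>f y\<bar> powr q) \<partial>lebesgue) / emeasure lebesgue (ball x r))"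
    if fm: "set_borel_measurable lebesgue E f" and r: "r > 0" for f and x :: 'a and r
  proof (rule ball_fin[OF fm Em \<sigma> q_def OB])
    show V: "emeasure lebesgue (ball x r) = ennreal (u * r ^ DIM('a))"
      unfolding u_def by (rule V_ball[OF r])
    show "u * r ^ DIM('a) > 0" using u r by simp
    show "c0 \<ge> 0" by (rule c0)
    have [measurable]: "ball x r \<in> sets borel" by simp
    have "(\<integral>\<^sup>+ y. ennreal (\<bar>\<Omega> (x-y)\<bar> powr \<sigma>) * indicator (ball x r) y \<partial>lebesgue)
        = (\<integral>\<^sup>+ y. h (\<Omega> (x-y)) * indicator (ball x r) y \<partial>lborel)"
      unfolding h_def by (rule nn_integral_completion)
    also have "\<dots> = ennreal (r ^ DIM('a)) * (\<integral>\<^sup>+ z. h (\<Omega> (r *\<^sub>R z)) * indicator (ball 0 1) z \<partial>lborel)"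
      by (rule scaling_lemma[where g="\<lambda>z. h (\<Omega> z)", OF _ r]) measurable
    also have "\<dots> = ennreal (r ^ DIM('a)) * A1" using r unfolding A1_def by (simp add: hom)
    also have "\<dots> = ennreal (c0 * (u * r ^ DIM('a)))"
      unfolding a1 c0_def using u r a1 by (simp add: ennreal_mult[symmetric])
    finally show "(\<integral>\<^sup>+ y. ennreal (\<bar>\<Omega> (x-y)\<bar> powr \<sigma>) * indicator (ball x r) y \<partial>lebesgue)
        \<le> ennreal (c0 * (u * r ^ DIM('a)))" by simp
  qed
  show ?thesis unfolding q_def[symmetric]
  proof (intro exI[of _ "c0/\<sigma> + 1/q + 1"] conjI allI impI)
    show "c0/\<sigma> + 1/q + 1 > 0" using c0 \<sigma> q1 by (intro add_nonneg_pos) auto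
    fix f :: "'a \<Rightarrow> real" and x :: 'a assume fm: "set_borel_measurable lebesgue E f"
    show "M_Omega E \<Omega> f x \<le> ennreal (c0/\<sigma> + 1/q + 1) * rootq q (HL_max E (\<lambda>y. \<bar>f y\<bar> powr q) x)"
      by (rule sup_reduction) (use q1 b[OF fm] in auto)
  qed
qed



theorem mainTheorem3:
  fixes E :: "'a::euclidean_space set" and \<Omega> :: "'a \<Rightarrow> real" and p :: "'a \<Rightarrow> real" and s :: ereal
  assumes "DIM('a) \<ge> 2"
    and "bounded E" and "open E"
    and "1 < s"
    and "Ls_sphere s \<Omega>"
    and "\<And>x t. t > 0 \<Longrightarrow> \<Omega> (t *\<^sub>R x) = \<Omega> x"
    and "P_log E p"
    and "B_class E (\<lambda>x. p x / sconj s)"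
    and "conj_plus E p \<le> s"
  shows "\<exists>C::real. \<forall>f\<in>var_Lp E p.
           lux_norm E p (M_Omega E \<Omega> f) \<le> ennreal C * lux_norm E p (\<lambda>x. ennreal \<bar>f x\<bar>)"
proof -
  have Em: "E \<in> sets lebesgue" using assms(3) by simp
  show ?thesis
  proof (cases s)
    case PInf
    have sc: "sconj s = 1" using PInf unfolding sconj_def by simp
    obtain K where K: "K > 0" and pw: "\<And>f x. set_borel_measurable lebesgue E f \<Longrightarrow>
       M_Omega E \<Omega> f x \<le> ennreal K * rootq 1 (HL_max E (\<lambda>y. \<bar>f y\<bar> powr 1) x)"
      using pointwise_inf[OF Em _ assms(6)] assms(5) PInf by blast
    show ?thesis
      by (rule main_assembly[OF _ Em _ pw K]) (use assms(8) sc in auto)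
  next
    case (real \<sigma>)
    have \<sigma>: "\<sigma> > 1" using assms(4) real by simp
    have sc: "sconj s = \<sigma> / (\<sigma> - 1)" using real unfolding sconj_def by simp
    have q1: "\<sigma> / (\<sigma> - 1) \<ge> 1" using \<sigma> by (simp add: le_divide_eq)
    obtain K where K: "K > 0" and pw: "\<And>f x. set_borel_measurable lebesgue E f \<Longrightarrow>
       M_Omega E \<Omega> f x \<le> ennreal K * rootq (\<sigma> / (\<sigma> - 1)) (HL_max E (\<lambda>y. \<bar>f y\<bar> powr (\<sigma> / (\<sigma> - 1))) x)"
      using pointwise_fin[OF Em \<sigma> _ assms(6)] assms(5) real by blast
    show ?thesis
      by (rule main_assembly[OF q1 Em _ pw K]) (use assms(8) sc in auto)
  next
    case MInf
    thus ?thesis using assms(4) by simp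
  qed
qed


end
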